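(* Let $r \in \mathbb{Q}_{>0}$ be such that $S_r$ is atomic. The following are equivalent: (1) $r \in \mathbb{N}$; (2) $\rho(S_r) = 1$; (3) $\rho(S_r) < \infty$. Consequently, $\rho(S_r) \in \{1, \infty\}$.
   Context: For $q \in \mathbb{Q}_{>0}$, $\mathsf{n}(q),\mathsf{d}(q)$ are the positive coprime integers with $q = \mathsf{n}(q)/\mathsf{d}(q)$. $S_r$ is the additive submonoid of $(\mathbb{Q}_{\ge 0},+)$ generated by $\{r^n : n \in \mathbb{N}_0\}$; it is atomic exactly when $r=1$ or $\mathsf{n}(r)>1$. $\mathsf{L}(x)$ denotes the set of lengths of factorizations of $x$ into atoms. The elasticity of $x \ne 0$ is $\rho(x) = \sup \mathsf{L}(x)/\inf \mathsf{L}(x) \in \mathbb{Q}_{\ge 1} \cup \{\infty\}$, $\rho(0)=1$, and $\rho(S_r) = \sup\{\rho(x) : x \in S_r \setminus \{0\}\}$. *)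

theory Defs
  imports Complex_Main "HOL-Library.Multiset" "HOL-Library.Extended_Real"
begin

inductive_set Sr :: "rat \<Rightarrow> rat set" for r :: rat where
  zero: "0 \<in> Sr r"
| gen: "x \<in> Sr r \<Longrightarrow> x + r ^ n \<in> Sr r"

text \<open>Atoms of a (reduced) submonoid M of (Q_{\<ge>0},+): nonzero elements that are not
  a sum of two nonzero elements of M (the only unit is 0).\<close>
definition atoms :: "rat set \<Rightarrow> rat set" where
  "atoms M = {a \<in> M. a \<noteq> 0 \<and> (\<forall>b\<in>M. \<forall>c\<in>M. a = b + c \<longrightarrow> b = 0 \<or> c = 0)}"

definition factorizations :: "rat set \<Rightarrow> rat \<Rightarrow> rat multiset set" where
  "factorizations M x = {F. set_mset F \<subseteq> atoms M \<and> sum_mset F = x}"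

definition lengths :: "rat set \<Rightarrow> rat \<Rightarrow> nat set" where
  "lengths M x = size ` factorizations M x"

definition atomic_monoid :: "rat set \<Rightarrow> bool" where
  "atomic_monoid M \<longleftrightarrow> (\<forall>x\<in>M. x \<noteq> 0 \<longrightarrow> factorizations M x \<noteq> {})"

definition elasticity :: "rat set \<Rightarrow> rat \<Rightarrow> ereal" where
  "elasticity M x = (if x = 0 then 1 else
     (SUP l\<in>lengths M x. ereal (real l)) / (INF l\<in>lengths M x. ereal (real l)))"

definition monoid_elasticity :: "rat set \<Rightarrow> ereal" where
  "monoid_elasticity M = (SUP x\<in>M - {0}. elasticity M x)"

end

theory Submission
  imports Defs
begin


lemma Sr_nonneg: "x \<in> Sr r \<Longrightarrow> r > 0 \<Longrightarrow> x \<ge> 0"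
  by (induction rule: Sr.induct) auto

lemma Sr_add: "y \<in> Sr r \<Longrightarrow> x \<in> Sr r \<Longrightarrow> x + y \<in> Sr r"
proof (induction rule: Sr.induct)
  case zero then show ?case by simp
next
  case (gen y n) then show ?case using Sr.gen[of "x+y" r n] by (simp add: add.assoc)
qed

lemma Sr_pow: "r ^ n \<in> Sr r"
  using Sr.gen[OF Sr.zero, of r n] by simp

lemma Sr_mult: "of_nat m * r ^ n \<in> Sr r"
proof (induction m)
  case 0 then show ?case by (simp add: Sr.zero)
next
  case (Suc m) then show ?case using Sr.gen[OF Suc, of n] by (simp add: algebra_simps)
qed

lemma big_case:
  fixes A D :: nat
  assumes r: "r = of_nat A / of_nat D" and D: "D > 0" and gt: "r > 1"
  shows "x \<in> Sr r \<Longrightarrow> x < r ^ k \<Longrightarrow> \<exists>z::nat. x * of_nat D ^ k = of_nat D * of_nat z"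
proof (induction rule: Sr.induct)
  case zero then show ?case by (intro exI[of _ 0]) simp
next
  case (gen x n)
  have x0: "x \<ge> 0" using gen.hyps Sr_nonneg gt by auto
  have "r ^ n > 0" using gt by simp
  then have "x < r ^ k" using gen by simp
  then obtain z where z: "x * of_nat D ^ k = of_nat D * of_nat z" using gen.IH by blast
  have "r ^ n < r ^ k" using gen.prems x0 by simp
  then have "n < k" using gt power_less_imp_less_exp by blast
  then obtain j where k: "k = n + Suc j" by (auto simp: less_iff_Suc_add)
  have "r ^ n * of_nat D ^ k = of_nat A ^ n * of_nat D ^ Suc j"
    using D by (simp add: r k power_add power_divide)
  then show ?case
    by (rule_tac exI[of _ "z + A ^ n * D ^ j"]) (simp add: distrib_right z algebra_simps)
qed

lemma small_case:
  fixes A D :: nat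
  assumes r: "r = of_nat A / of_nat D" and D: "D > 0" and lt: "r < 1" and r0: "r > 0"
  shows "x \<in> Sr r \<Longrightarrow> x < r ^ k \<Longrightarrow> \<exists>N0. \<forall>N\<ge>N0. \<exists>z::nat. x * of_nat D ^ N = of_nat A ^ Suc k * of_nat z"
proof (induction rule: Sr.induct)
  case zero then show ?case by auto
next
  case (gen x n)
  have x0: "x \<ge> 0" using gen.hyps Sr_nonneg r0 by auto
  have "r ^ n > 0" using r0 by simp
  then have "x < r ^ k" using gen by simp
  then obtain N0 where z: "\<And>N. N \<ge> N0 \<Longrightarrow> \<exists>z::nat. x * of_nat D ^ N = of_nat A ^ Suc k * of_nat z" using gen.IH by blast
  have "r ^ n < r ^ k" using gen.prems x0 by simp
  then have "k < n" using power_strict_decreasing_iff[OF r0 lt] by blast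
  then obtain j where n: "n = Suc k + j" by (auto simp: less_iff_Suc_add)
  show ?case
  proof (rule exI[of _ "max N0 n"], intro allI impI)
    fix N assume N: "max N0 n \<le> N"
    then obtain z1 where z1: "x * of_nat D ^ N = of_nat A ^ Suc k * of_nat z1" using z by auto
    obtain i where Ni: "N = n + i" using N by (metis le_Suc_ex max.bounded_iff)
    have "r ^ n * of_nat D ^ N = of_nat A ^ n * of_nat D ^ i"
      using D by (simp add: r Ni power_add power_divide)
    also have "\<dots> = of_nat A ^ Suc k * of_nat (A ^ j * D ^ i)" by (simp add: n power_add)
    finally show "\<exists>z::nat. (x + r ^ n) * of_nat D ^ N = of_nat A ^ Suc k * of_nat z"
      by (rule_tac exI[of _ "z1 + A ^ j * D ^ i"]) (simp add: distrib_right z1 algebra_simps)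
  qed
qed



lemma pow_atom:
  fixes A D :: nat
  assumes r: "r = of_nat A / of_nat D" and A: "A > 1" and D: "D > 1" and cop: "coprime A D"
  shows "r ^ k \<in> atoms (Sr r)"
proof -
  have r0: "r > 0" using A D by (simp add: r)
  have rne: "r \<noteq> 1"
  proof
    assume "r = 1" then have "A = D" using D by (simp add: r)
    then show False using cop A by simp
  qed
  have "\<not> (\<exists>b\<in>Sr r. \<exists>c\<in>Sr r. r ^ k = b + c \<and> b \<noteq> 0 \<and> c \<noteq> 0)"
  proof
    assume "\<exists>b\<in>Sr r. \<exists>c\<in>Sr r. r ^ k = b + c \<and> b \<noteq> 0 \<and> c \<noteq> 0"
    then obtain b c where b: "b \<in> Sr r" and c: "c \<in> Sr r" and e: "r ^ k = b + c" and "b \<noteq> 0" "c \<noteq> 0" by blast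
    then have bp: "b > 0" and cp: "c > 0" using Sr_nonneg[OF b r0] Sr_nonneg[OF c r0] by auto
    have bl: "b < r ^ k" and cl: "c < r ^ k" using e bp cp by auto
    have rk: "r ^ k * of_nat D ^ k = of_nat A ^ k" using D by (simp add: r power_divide)
    show False
    proof (cases "r > 1")
      case True
      obtain z1 where z1: "b * of_nat D ^ k = of_nat D * of_nat z1" using big_case[OF r _ True b bl] D by auto
      obtain z2 where z2: "c * of_nat D ^ k = of_nat D * of_nat z2" using big_case[OF r _ True c cl] D by auto
      have "(of_nat (A ^ k) :: rat) = of_nat (D * (z1 + z2))"
        using rk e z1 z2 by (simp add: distrib_right distrib_left)
      then have "A ^ k = D * (z1 + z2)" by (simp only: of_nat_eq_iff)
      then have "D dvd A ^ k" by simp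
      moreover have "coprime D (A ^ k)" using cop by (simp add: coprime_commute)
      ultimately have "D dvd 1" by (metis coprime_absorb_right coprime_commute dvd_refl dvd_trans)
      then show False using D by simp
    next
      case False
      then have lt: "r < 1" using rne by simp
      obtain N1 where z1: "\<And>N. N \<ge> N1 \<Longrightarrow> \<exists>z::nat. b * of_nat D ^ N = of_nat A ^ Suc k * of_nat z"
        using small_case[OF r _ lt r0 b bl] D by auto
      obtain N2 where z2: "\<And>N. N \<ge> N2 \<Longrightarrow> \<exists>z::nat. c * of_nat D ^ N = of_nat A ^ Suc k * of_nat z"
        using small_case[OF r _ lt r0 c cl] D by auto
      define N where "N = N1 + N2 + k"
      obtain y1 where y1: "b * of_nat D ^ N = of_nat A ^ Suc k * of_nat y1" using z1[of N] N_def by auto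
      obtain y2 where y2: "c * of_nat D ^ N = of_nat A ^ Suc k * of_nat y2" using z2[of N] N_def by auto
      have "r ^ k * of_nat D ^ N = of_nat A ^ k * of_nat D ^ (N1 + N2)"
        using rk by (simp add: N_def power_add)
      then have "(of_nat (A ^ k * D ^ (N1 + N2)) :: rat) = of_nat (A ^ k * (A * (y1 + y2)))"
        using e y1 y2 by (simp add: distrib_right distrib_left algebra_simps)
      then have "A ^ k * D ^ (N1 + N2) = A ^ k * (A * (y1 + y2))" by (simp only: of_nat_eq_iff)
      then have "D ^ (N1 + N2) = A * (y1 + y2)" using A by simp
      then have "A dvd D ^ (N1 + N2)" by simp
      moreover have "coprime A (D ^ (N1 + N2))" using cop by simp
      ultimately have "A dvd 1" by (metis coprime_absorb_right coprime_commute dvd_refl dvd_trans)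
      then show False using A by simp
    qed
  qed
  then show ?thesis unfolding atoms_def using Sr_pow[of r k] r0 by auto
qed



lemma lengths_pos: "x \<noteq> 0 \<Longrightarrow> l \<in> lengths M x \<Longrightarrow> l \<ge> 1"
proof -
  assume x: "x \<noteq> 0" and l: "l \<in> lengths M x"
  then obtain F where F: "sum_mset F = x" and lF: "l = size F"
    unfolding lengths_def factorizations_def by blast
  have "F \<noteq> {#}" using F x by auto
  then have "size F \<noteq> 0" by simp
  then show "l \<ge> 1" using lF by linarith
qed

lemma elast_ge:
  assumes x: "x \<noteq> 0" and l1: "l1 \<in> lengths M x" and l2: "l2 \<in> lengths M x"
  shows "elasticity M x \<ge> ereal (real l1 / real l2)"
proof -
  define S where "S = (SUP l\<in>lengths M x. ereal (real l))"
  define I where "I = (INF l\<in>lengths M x. ereal (real l))"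
  have e: "elasticity M x = S / I" using x by (simp add: elasticity_def S_def I_def)
  have Il: "I \<le> ereal (real l2)" unfolding I_def by (rule INF_lower[OF l2])
  have Ig: "I \<ge> 1" unfolding I_def using lengths_pos[OF x]
    by (intro INF_greatest) (simp add: one_ereal_def)
  have Sg: "S \<ge> ereal (real l1)" unfolding S_def by (rule SUP_upper[OF l1])
  obtain i where i: "I = ereal i" using Il Ig by (cases I) auto
  have i1: "i \<ge> 1" and i2: "i \<le> real l2" using Ig Il i by (auto simp: one_ereal_def)
  show ?thesis
  proof (cases S)
    case (real s)
    then have s: "s \<ge> real l1" using Sg by simp
    have "real l1 / real l2 \<le> s / real l2"
      using s by (simp add: divide_right_mono)
    also have "\<dots> \<le> s / i"
      using s i1 i2 by (intro divide_left_mono) auto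
    finally have "real l1 / real l2 \<le> s / i" .
    then show ?thesis using e i real i1 by simp
  next
    case PInf then show ?thesis using e i i1 by simp
  next
    case MInf then show ?thesis using Sg by simp
  qed
qed

lemma Sr_nat: "x \<in> Sr r \<Longrightarrow> r \<in> \<nat> \<Longrightarrow> x \<in> \<nat>"
proof (induction rule: Sr.induct)
  case zero then show ?case by simp
next
  case (gen x n)
  then obtain m where "r = of_nat m" by (auto elim: Nats_cases)
  then have "r ^ n = of_nat (m ^ n)" by simp
  then show ?case using gen.IH[OF gen.prems] Nats_add of_nat_in_Nats by metis
qed

lemma int_case:
  assumes r: "r = of_nat n" and n: "n > 0" and at: "atomic_monoid (Sr r)"
  shows "monoid_elasticity (Sr r) = 1"
proof -
  have atoms1: "atoms (Sr r) \<subseteq> {1}"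
  proof
    fix a assume a: "a \<in> atoms (Sr r)"
    then have aS: "a \<in> Sr r" and a0: "a \<noteq> 0" and ind: "\<And>b c. b \<in> Sr r \<Longrightarrow> c \<in> Sr r \<Longrightarrow> a = b + c \<Longrightarrow> b = 0 \<or> c = 0"
      unfolding atoms_def by auto
    obtain m where m: "a = of_nat m" using Sr_nat[OF aS] r by (auto elim: Nats_cases)
    have "m = 1"
    proof (rule ccontr)
      assume "m \<noteq> 1"
      then have m2: "m \<ge> 2" using a0 m by auto
      have "1 \<in> Sr r" using Sr_pow[of r 0] by simp
      moreover have "of_nat (m - 1) \<in> Sr r" using Sr_mult[of "m - 1" r 0] by simp
      moreover have "a = 1 + of_nat (m - 1)" using m m2 by (simp add: of_nat_diff)
      ultimately have "(1::rat) = 0 \<or> (of_nat (m - 1) :: rat) = 0" using ind by blast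
      then show False using m2 by simp
    qed
    then show "a \<in> {1}" using m by simp
  qed
  have el: "elasticity (Sr r) x = 1" if xS: "x \<in> Sr r" and x0: "x \<noteq> 0" for x
  proof -
    have all: "real l = real_of_rat x" if lL0: "l \<in> lengths (Sr r) x" for l
    proof -
      obtain F where F: "F \<in> factorizations (Sr r) x" and l: "l = size F"
        using lL0 unfolding lengths_def by auto
      then have "F = replicate_mset (size F) 1"
        using atoms1 by (intro set_mset_subset_singletonD) (auto simp: factorizations_def)
      then have "x = of_nat l" using F l unfolding factorizations_def
        by (metis (mono_tags, lifting) mem_Collect_eq mult.right_neutral sum_mset_replicate_mset)
      then show ?thesis by simp
    qed
    obtain F where F: "F \<in> factorizations (Sr r) x" using at xS x0 unfolding atomic_monoid_def by auto
    define l where "l = size F"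
    have lL: "l \<in> lengths (Sr r) x" using F l_def unfolding lengths_def by auto
    have L: "lengths (Sr r) x = {l}"
    proof
      show "lengths (Sr r) x \<subseteq> {l}"
      proof
        fix l' assume l': "l' \<in> lengths (Sr r) x"
        have "real l' = real l" using all[OF l'] all[OF lL] by simp
        then show "l' \<in> {l}" by simp
      qed
    qed (use lL in simp)
    have "l \<ge> 1" using lengths_pos[OF x0 lL] .
    then show ?thesis using x0 by (simp add: elasticity_def L)
  qed
  have "1 \<in> Sr r - {0}" using Sr_pow[of r 0] by simp
  then have ne: "Sr r - {0} \<noteq> {}" by (metis empty_iff)
  have "(SUP x\<in>Sr r - {0}. elasticity (Sr r) x) = (SUP x\<in>Sr r - {0}. (1::ereal))"
    by (rule SUP_cong) (auto simp: el)
  then show ?thesis unfolding monoid_elasticity_def using SUP_const[OF ne] by simp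
qed

lemma not_atomic:
  assumes r: "r = 1 / of_nat D" and D: "D > 1"
  shows "\<not> atomic_monoid (Sr r)"
proof
  assume at: "atomic_monoid (Sr r)"
  have r0: "r > 0" using D r by simp
  have noat: "atoms (Sr r) = {}"
  proof (rule ccontr)
    assume "atoms (Sr r) \<noteq> {}"
    then obtain y where "y \<in> atoms (Sr r)" by blast
    then have yS: "y \<in> Sr r" and y0: "y \<noteq> 0" and ind: "\<And>b c. b \<in> Sr r \<Longrightarrow> c \<in> Sr r \<Longrightarrow> y = b + c \<Longrightarrow> b = 0 \<or> c = 0"
      unfolding atoms_def by auto
    obtain x n where xS: "x \<in> Sr r" and y: "y = x + r ^ n" using yS y0 by (cases rule: Sr.cases) auto
    have h: "of_nat D * r ^ Suc n = r ^ n" using D by (simp add: r)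
    have h2: "of_nat (D - 1) * r ^ Suc n + r ^ Suc n = r ^ n"
    proof -
      have "(of_nat (D - 1) :: rat) = of_nat D - 1" using D by (simp add: of_nat_diff)
      then have "of_nat (D - 1) * r ^ Suc n + r ^ Suc n = of_nat D * r ^ Suc n"
        by (simp add: left_diff_distrib)
      then show ?thesis using h by simp
    qed
    have e: "y = (x + of_nat (D - 1) * r ^ Suc n) + r ^ Suc n"
      unfolding y using h2 by (simp add: add.assoc)
    have s1: "x + of_nat (D - 1) * r ^ Suc n \<in> Sr r" by (rule Sr_add[OF Sr_mult xS])
    have s2: "r ^ Suc n \<in> Sr r" by (rule Sr_pow)
    have n1: "x + of_nat (D - 1) * r ^ Suc n \<noteq> 0"
    proof -
      have "x \<ge> 0" using Sr_nonneg[OF xS r0] .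
      moreover have "of_nat (D - 1) * r ^ Suc n > 0" using D r0 by simp
      ultimately show ?thesis by linarith
    qed
    have n2: "r ^ Suc n \<noteq> 0" using r0 by simp
    show False using ind[OF s1 s2 e] n1 n2 by simp
  qed
  have "1 \<in> Sr r" using Sr_pow[of r 0] by simp
  then obtain F where "F \<in> factorizations (Sr r) 1" using at unfolding atomic_monoid_def by fastforce
  then show False using noat unfolding factorizations_def by auto
qed



lemma inf_case:
  fixes A D :: nat
  assumes r: "r = of_nat A / of_nat D" and A: "A > 1" and D: "D > 1" and cop: "coprime A D"
  shows "monoid_elasticity (Sr r) = \<infinity>"
proof -
  have r0: "r > 0" using A D r by simp
  have key: "monoid_elasticity (Sr r) \<ge> ereal (real (A ^ k) / real (D ^ k)) \<and>
             monoid_elasticity (Sr r) \<ge> ereal (real (D ^ k) / real (A ^ k))" for k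
  proof -
    define x :: rat where "x = of_nat (A ^ k)"
    have xS: "x \<in> Sr r" using Sr_mult[of "A ^ k" r 0] by (simp add: x_def)
    have x0: "x \<noteq> 0" using A by (simp add: x_def)
    have a1: "1 \<in> atoms (Sr r)" using pow_atom[OF r A D cop, of 0] by simp
    have ak: "r ^ k \<in> atoms (Sr r)" using pow_atom[OF r A D cop, of k] .
    have "replicate_mset (A ^ k) 1 \<in> factorizations (Sr r) x"
      using a1 by (simp add: factorizations_def x_def)
    then have l1: "A ^ k \<in> lengths (Sr r) x" unfolding lengths_def
      by (metis image_eqI size_replicate_mset)
    have "of_nat (D ^ k) * r ^ k = x" using D by (simp add: x_def r power_divide)
    then have "replicate_mset (D ^ k) (r ^ k) \<in> factorizations (Sr r) x"
      using ak by (simp add: factorizations_def)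
    then have l2: "D ^ k \<in> lengths (Sr r) x" unfolding lengths_def
      by (metis image_eqI size_replicate_mset)
    have me: "elasticity (Sr r) x \<le> monoid_elasticity (Sr r)"
      unfolding monoid_elasticity_def using xS x0 by (intro SUP_upper) auto
    show ?thesis using elast_ge[OF x0 l1 l2] elast_ge[OF x0 l2 l1] me by (meson order_trans)
  qed
  show ?thesis
  proof (rule ereal_top)
    fix B
    have "A \<noteq> D" using cop A by auto
    then consider "A > D" | "D > A" by linarith
    then show "monoid_elasticity (Sr r) \<ge> ereal B"
    proof cases
      case 1
      then have "real A / real D > 1" using D by simp
      then obtain n where n: "B < (real A / real D) ^ n" using real_arch_pow by blast
      then have "B < real (A ^ n) / real (D ^ n)" by (simp add: power_divide)
      then show ?thesis using key[of n] by (meson ereal_less_eq(3) less_imp_le order_trans)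
    next
      case 2
      then have "real D / real A > 1" using A by simp
      then obtain n where n: "B < (real D / real A) ^ n" using real_arch_pow by blast
      then have "B < real (D ^ n) / real (A ^ n)" by (simp add: power_divide)
      then show ?thesis using key[of n] by (meson ereal_less_eq(3) less_imp_le order_trans)
    qed
  qed
qed

theorem corollary4p2:
  fixes r :: rat
  assumes "r > 0" and "atomic_monoid (Sr r)"
  shows "(r \<in> \<nat> \<longleftrightarrow> monoid_elasticity (Sr r) = 1)
    \<and> (monoid_elasticity (Sr r) = 1 \<longleftrightarrow> monoid_elasticity (Sr r) < \<infinity>)
    \<and> monoid_elasticity (Sr r) \<in> {1, \<infinity>}"
proof (cases "r \<in> \<nat>")
  case True
  then obtain n where n: "r = of_nat n" by (auto elim: Nats_cases)
  then have "n > 0" using assms(1) by simp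
  then have "monoid_elasticity (Sr r) = 1" using int_case[OF n _ assms(2)] by simp
  then show ?thesis using True by simp
next
  case False
  obtain a b where q: "quotient_of r = (a, b)" by (cases "quotient_of r")
  have b0: "b > 0" using quotient_of_denom_pos[OF q] .
  have rq: "r = of_int a / of_int b" using quotient_of_div[OF q] .
  have cab: "coprime a b" using quotient_of_coprime[OF q] .
  have a0: "a > 0" using assms(1) b0 rq by (simp add: zero_less_divide_iff)
  define A where "A = nat a"
  define D where "D = nat b"
  have rAD: "r = of_nat A / of_nat D" using a0 b0 rq by (simp add: A_def D_def)
  have cop: "coprime A D" using cab a0 b0 unfolding A_def D_def
    by (metis coprime_int_iff int_nat_eq less_le)
  have D1: "D > 1"
  proof (rule ccontr)
    assume "\<not> D > 1"
    then have "D = 1" using b0 D_def by linarith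
    then have "r = of_nat A" using rAD by simp
    then show False using False by simp
  qed
  have A1: "A > 1"
  proof (rule ccontr)
    assume "\<not> A > 1"
    then have "A = 1" using a0 A_def by linarith
    then have "r = 1 / of_nat D" using rAD by simp
    then show False using not_atomic D1 assms(2) by blast
  qed
  have "monoid_elasticity (Sr r) = \<infinity>" using inf_case[OF rAD A1 D1 cop] .
  then show ?thesis using False by simp
qed


end
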